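(* Let $k \ge 3$ and $n \ge 1$ be integers and let $1 \le \rho \le n$. Suppose there exist $k-2$ mutually orthogonal latin squares of order $n$ having a common partial transversal of size $\rho$. Then there exists a $((k-1)n+\rho, k)$-packing with exactly $\rho n + D(\rho,k)$ blocks in which the largest partial parallel class has size $\rho$.
   Context: For integers $v \ge k \ge 2$, a $(v,k)$-packing is a pair $(X,\mathcal{B})$ where $X$ is a set of $v$ points and $\mathcal{B}$ is a set of $k$-subsets of $X$ (blocks) such that every pair of distinct points lies in at most one block. For integers $m \ge 0$, $D(m,k)$ denotes the maximum number of $k$-subsets of an $m$-set such that every pair of points lies in at most one of them (so $D(m,k)=0$ if $m<k$). A partial parallel class (PPC) is a set of pairwise disjoint blocks; its size is the number of blocks. "The largest PPC has size $\rho$" means the packing has a PPC of size $\rho$ but none of size $\rho+1$. A common (partial) transversal of size $\rho$ of a set of latin squares of order $n$ is a set of $\rho$ cells, no two in the same row or the same column, such that in each of the latin squares the symbols in these $\rho$ cells are pairwise distinct. *)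

theory Defs
  imports Main
begin

definition latin_square :: "nat \<Rightarrow> (nat \<Rightarrow> nat \<Rightarrow> nat) \<Rightarrow> bool" where
  "latin_square n L \<longleftrightarrow>
     (\<forall>i<n. bij_betw (\<lambda>j. L i j) {0..<n} {0..<n}) \<and>
     (\<forall>j<n. bij_betw (\<lambda>i. L i j) {0..<n} {0..<n})"

definition orthogonal :: "nat \<Rightarrow> (nat \<Rightarrow> nat \<Rightarrow> nat) \<Rightarrow> (nat \<Rightarrow> nat \<Rightarrow> nat) \<Rightarrow> bool" where
  "orthogonal n L1 L2 \<longleftrightarrow>
     inj_on (\<lambda>(i, j). (L1 i j, L2 i j)) ({0..<n} \<times> {0..<n})"

definition MOLS :: "nat \<Rightarrow> (nat \<Rightarrow> nat \<Rightarrow> nat) list \<Rightarrow> bool" where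
  "MOLS n Ls \<longleftrightarrow>
     (\<forall>L\<in>set Ls. latin_square n L) \<and>
     (\<forall>a<length Ls. \<forall>b<length Ls. a \<noteq> b \<longrightarrow> orthogonal n (Ls ! a) (Ls ! b))"

definition common_partial_transversal ::
  "nat \<Rightarrow> (nat \<Rightarrow> nat \<Rightarrow> nat) list \<Rightarrow> (nat \<times> nat) set \<Rightarrow> bool" where
  "common_partial_transversal n Ls T \<longleftrightarrow>
     T \<subseteq> {0..<n} \<times> {0..<n} \<and> inj_on fst T \<and> inj_on snd T \<and>
     (\<forall>L\<in>set Ls. inj_on (\<lambda>(i, j). L i j) T)"

definition packing :: "nat \<Rightarrow> nat \<Rightarrow> 'a set \<Rightarrow> 'a set set \<Rightarrow> bool" where
  "packing v k X B \<longleftrightarrow>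
     finite X \<and> card X = v \<and> (\<forall>b\<in>B. b \<subseteq> X \<and> card b = k) \<and>
     (\<forall>x y. x \<noteq> y \<longrightarrow> card {b\<in>B. x \<in> b \<and> y \<in> b} \<le> 1)"

definition D :: "nat \<Rightarrow> nat \<Rightarrow> nat" where
  "D m k = Max {card B | B :: nat set set. packing m k {0..<m} B}"

definition PPC :: "'a set set \<Rightarrow> 'a set set \<Rightarrow> bool" where
  "PPC B P \<longleftrightarrow> P \<subseteq> B \<and> (\<forall>b\<in>P. \<forall>c\<in>P. b \<noteq> c \<longrightarrow> b \<inter> c = {})"

definition largest_PPC_size :: "'a set set \<Rightarrow> nat \<Rightarrow> bool" where
  "largest_PPC_size B r \<longleftrightarrow>
     (\<exists>P. PPC B P \<and> finite P \<and> card P = r) \<and> \<not> (\<exists>P. PPC B P \<and> finite P \<and> card P = r + 1)"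

end

theory Submission
  imports Defs
begin

definition linear_bl :: "'a set set \<Rightarrow> bool" where
  "linear_bl B \<longleftrightarrow> (\<forall>b\<in>B. \<forall>c\<in>B. \<forall>x y. x \<noteq> y \<and> x \<in> b \<and> y \<in> b \<and> x \<in> c \<and> y \<in> c \<longrightarrow> b = c)"

lemma pair_from_lin:
  assumes "finite B" "linear_bl B" "x \<noteq> y"
  shows "card {b\<in>B. x \<in> b \<and> y \<in> b} \<le> 1"
proof -
  have "finite {b\<in>B. x \<in> b \<and> y \<in> b}" using assms(1) by simp
  note fin = this
  have "\<forall>a1\<in>{b\<in>B. x \<in> b \<and> y \<in> b}. \<forall>a2\<in>{b\<in>B. x \<in> b \<and> y \<in> b}. a1 = a2"
    using assms(2,3) unfolding linear_bl_def by blast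
  then have "card {b\<in>B. x \<in> b \<and> y \<in> b} \<le> Suc 0" using card_le_Suc0_iff_eq[OF fin] by blast
  then show ?thesis by simp
qed

lemma lin_from_pair:
  assumes "finite B" "\<forall>x y. x \<noteq> y \<longrightarrow> card {b\<in>B. x \<in> b \<and> y \<in> b} \<le> 1"
  shows "linear_bl B"
  unfolding linear_bl_def
proof (intro ballI allI impI)
  fix b c x y assume h: "b \<in> B" "c \<in> B" "x \<noteq> y \<and> x \<in> b \<and> y \<in> b \<and> x \<in> c \<and> y \<in> c"
  have "finite {b\<in>B. x \<in> b \<and> y \<in> b}" using assms(1) by simp
  note fin = this
  have "card {b\<in>B. x \<in> b \<and> y \<in> b} \<le> Suc 0" using assms(2) h by simp
  then have "\<forall>a1\<in>{b\<in>B. x \<in> b \<and> y \<in> b}. \<forall>a2\<in>{b\<in>B. x \<in> b \<and> y \<in> b}. a1 = a2"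
    using card_le_Suc0_iff_eq[OF fin] by blast
  then show "b = c" using h by blast
qed

locale cstr =
  fixes k n \<rho> :: nat and Ls :: "(nat \<Rightarrow> nat \<Rightarrow> nat) list" and e :: "nat \<Rightarrow> nat \<times> nat"
  assumes k3: "k \<ge> 3" and n1: "n \<ge> 1" and len: "length Ls = k - 2" and mols: "MOLS n Ls"
    and cpt: "common_partial_transversal n Ls (e ` {0..<\<rho>})" and einj: "inj_on e {0..<\<rho>}"
begin

definition R where "R m = fst (e m)"
definition S where "S m = snd (e m)"
definition pt where "pt m j c = (if c = 0 then m else if c = 1 then \<rho> + j
   else \<rho> + (c-1)*n + (Ls!(c-2)) (R m) j)"
definition grp where "grp x = (if x < \<rho> then 0 else (x - \<rho>) div n + 1)"
definition blk where "blk m j = pt m j ` {0..<k}"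

lemma latin: "a < k-2 \<Longrightarrow> latin_square n (Ls!a)" using mols len by (auto simp: MOLS_def)

lemma Lval: "a<k-2 \<Longrightarrow> i<n \<Longrightarrow> j<n \<Longrightarrow> (Ls!a) i j < n"
proof -
  assume h: "a<k-2" "i<n" "j<n"
  have bj: "bij_betw (\<lambda>j. (Ls!a) i j) {0..<n} {0..<n}" using latin[OF h(1)] h by (simp add: latin_square_def)
  have "(Ls!a) i j \<in> {0..<n}" using bij_betw_apply[OF bj, of j] h(3) by simp
  then show ?thesis by simp
qed

lemma Lrow: "a<k-2 \<Longrightarrow> i<n \<Longrightarrow> j<n \<Longrightarrow> j'<n \<Longrightarrow> (Ls!a) i j = (Ls!a) i j' \<Longrightarrow> j = j'"
proof -
  assume h: "a<k-2" "i<n" "j<n" "j'<n" "(Ls!a) i j = (Ls!a) i j'"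
  have "bij_betw (\<lambda>j. (Ls!a) i j) {0..<n} {0..<n}" using latin[OF h(1)] h by (simp add: latin_square_def)
  then have "inj_on (\<lambda>j. (Ls!a) i j) {0..<n}" by (simp add: bij_betw_def)
  from inj_onD[OF this] h show ?thesis by simp
qed

lemma Lcol: "a<k-2 \<Longrightarrow> i<n \<Longrightarrow> j<n \<Longrightarrow> i'<n \<Longrightarrow> (Ls!a) i j = (Ls!a) i' j \<Longrightarrow> i = i'"
proof -
  assume h: "a<k-2" "i<n" "j<n" "i'<n" "(Ls!a) i j = (Ls!a) i' j"
  have "bij_betw (\<lambda>i. (Ls!a) i j) {0..<n} {0..<n}" using latin[OF h(1)] h by (simp add: latin_square_def)
  then have "inj_on (\<lambda>i. (Ls!a) i j) {0..<n}" by (simp add: bij_betw_def)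
  from inj_onD[OF this] h show ?thesis by simp
qed

lemma Lorth: "a<k-2 \<Longrightarrow> b<k-2 \<Longrightarrow> a\<noteq>b \<Longrightarrow> i<n \<Longrightarrow> j<n \<Longrightarrow> i'<n \<Longrightarrow> j'<n \<Longrightarrow>
   (Ls!a) i j = (Ls!a) i' j' \<Longrightarrow> (Ls!b) i j = (Ls!b) i' j' \<Longrightarrow> i=i' \<and> j=j'"
proof -
  assume h: "a<k-2" "b<k-2" "a\<noteq>b" "i<n" "j<n" "i'<n" "j'<n"
    "(Ls!a) i j = (Ls!a) i' j'" "(Ls!b) i j = (Ls!b) i' j'"
  have "orthogonal n (Ls!a) (Ls!b)" using mols len h by (auto simp: MOLS_def)
  then have "inj_on (\<lambda>(i, j). ((Ls!a) i j, (Ls!b) i j)) ({0..<n} \<times> {0..<n})"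
    by (simp add: orthogonal_def)
  note inj = this
  have "(i,j) = (i',j')" by (rule inj_onD[OF inj]) (use h in auto)
  then show ?thesis by simp
qed

lemma eT: "m<\<rho> \<Longrightarrow> e m = (R m, S m)" by (simp add: R_def S_def)

lemma RS: "m<\<rho> \<Longrightarrow> R m < n \<and> S m < n"
proof -
  assume h: "m<\<rho>"
  have "e m \<in> e ` {0..<\<rho>}" using h by simp
  then have "e m \<in> {0..<n} \<times> {0..<n}" using cpt unfolding common_partial_transversal_def by blast
  then show ?thesis unfolding R_def S_def by (simp add: mem_Times_iff)
qed

lemma Rinj: "m<\<rho> \<Longrightarrow> m'<\<rho> \<Longrightarrow> R m = R m' \<Longrightarrow> m = m'"
proof -
  assume h: "m<\<rho>" "m'<\<rho>" "R m = R m'"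
  have "inj_on fst (e ` {0..<\<rho>})" using cpt by (simp add: common_partial_transversal_def)
  then have "e m = e m'" using h unfolding R_def by (auto intro: inj_onD)
  then show ?thesis using einj h by (auto dest: inj_onD)
qed

lemma Sinj: "m<\<rho> \<Longrightarrow> m'<\<rho> \<Longrightarrow> S m = S m' \<Longrightarrow> m = m'"
proof -
  assume h: "m<\<rho>" "m'<\<rho>" "S m = S m'"
  have "inj_on snd (e ` {0..<\<rho>})" using cpt by (simp add: common_partial_transversal_def)
  then have "e m = e m'" using h unfolding S_def by (auto intro: inj_onD)
  then show ?thesis using einj h by (auto dest: inj_onD)
qed

lemma Tsym: "a<k-2 \<Longrightarrow> m<\<rho> \<Longrightarrow> m'<\<rho> \<Longrightarrow> (Ls!a) (R m) (S m) = (Ls!a) (R m') (S m') \<Longrightarrow> m = m'"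
proof -
  assume h: "a<k-2" "m<\<rho>" "m'<\<rho>" "(Ls!a) (R m) (S m) = (Ls!a) (R m') (S m')"
  have "Ls!a \<in> set Ls" using h len by simp
  then have "inj_on (\<lambda>(i, j). (Ls!a) i j) (e ` {0..<\<rho>})" using cpt
    by (simp add: common_partial_transversal_def)
  note inj = this
  have "(\<lambda>(i, j). (Ls!a) i j) (e m) = (\<lambda>(i, j). (Ls!a) i j) (e m')" using h eT[of m] eT[of m'] by simp
  then have "e m = e m'" using h by (auto intro: inj_onD[OF inj])
  then show ?thesis using einj h by (auto dest: inj_onD)
qed

lemma pt_bound: "m<\<rho> \<Longrightarrow> j<n \<Longrightarrow> c<k \<Longrightarrow> pt m j c < \<rho> + (k-1)*n"
proof -
  assume h: "m<\<rho>" "j<n" "c<k"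
  show ?thesis
  proof (cases "c \<ge> 2")
    case True
    have s: "(Ls!(c-2)) (R m) j < n" using Lval RS h True by simp
    have "(c-1)*n + n = c*n" using True by (cases c) auto
    moreover have "c*n \<le> (k-1)*n" using h by simp
    ultimately have "(c-1)*n + (Ls!(c-2)) (R m) j < (k-1)*n" using s by linarith
    moreover have "pt m j c = \<rho> + ((c-1)*n + (Ls!(c-2)) (R m) j)" using True by (simp add: pt_def)
    ultimately show ?thesis by linarith
  next
    case False
    have "1 \<le> k-1" using k3 by simp
    then have "1*n \<le> (k-1)*n" by (rule mult_le_mono1)
    then have "n \<le> (k-1)*n" by simp
    then have nn: "\<rho> + n \<le> \<rho> + (k-1)*n" by linarith
    have "c = 0 \<or> c = 1" using False by auto
    then show ?thesis
    proof
      assume "c = 0" then show ?thesis using h nn by (simp add: pt_def)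
    next
      assume "c = 1" then have "pt m j c = \<rho> + j" by (simp add: pt_def)
      then show ?thesis using h nn by linarith
    qed
  qed
qed

lemma grp_pt: "m<\<rho> \<Longrightarrow> j<n \<Longrightarrow> c<k \<Longrightarrow> grp (pt m j c) = c"
proof -
  assume h: "m<\<rho>" "j<n" "c<k"
  show ?thesis
  proof (cases "c \<ge> 2")
    case True
    have s: "(Ls!(c-2)) (R m) j < n" using Lval RS h True by simp
    have "((c-1)*n + (Ls!(c-2)) (R m) j) div n = c - 1" using s n1 by simp
    then show ?thesis using True by (simp add: pt_def grp_def)
  next
    case False
    then show ?thesis using h by (auto simp: pt_def grp_def)
  qed
qed

lemma pt_ge: "c \<ge> 1 \<Longrightarrow> pt m j c \<ge> \<rho>" by (simp add: pt_def)

lemma pt0: "pt m j 0 = m" by (simp add: pt_def)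
lemma pt1: "pt m j 1 = \<rho> + j" by (simp add: pt_def)
lemma pt1': "pt m j (Suc 0) = \<rho> + j" by (simp add: pt_def)
lemma ptc: "c \<ge> 2 \<Longrightarrow> pt m j c = \<rho> + (c-1)*n + (Ls!(c-2)) (R m) j" by (simp add: pt_def)
lemma ptc_eq: "c \<ge> 2 \<Longrightarrow> pt m j c = pt m' j' c \<Longrightarrow> (Ls!(c-2)) (R m) j = (Ls!(c-2)) (R m') j'"
  by (simp add: ptc)

lemma key_lt:
  assumes h: "m<\<rho>" "m'<\<rho>" "j<n" "j'<n" "c<d" "d<k"
    "pt m j c = pt m' j' c" "pt m j d = pt m' j' d"
  shows "m = m' \<and> j = j'"
proof -
  have RR: "R m < n" "R m' < n" using RS h(1,2) by auto
  have dk: "d - 2 < k - 2" if "d \<ge> 2" using h(6) that by linarith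
  show ?thesis
  proof (cases "c = 0")
    case True
    then have mm: "m = m'" using h(7) by (simp add: pt0)
    show ?thesis
    proof (cases "d = 1")
      case True
      have "pt m j 1 = pt m' j' 1" using h(8) True by simp
      then have "j = j'" by (simp only: pt1)
      then show ?thesis using mm by simp
    next
      case False
      then have d2: "d \<ge> 2" using h(5) \<open>c = 0\<close> by linarith
      have "(Ls!(d-2)) (R m) j = (Ls!(d-2)) (R m') j'" using ptc_eq[OF d2 h(8)] .
      then have "(Ls!(d-2)) (R m) j = (Ls!(d-2)) (R m) j'" using mm by simp
      then have "j = j'" using Lrow[OF dk[OF d2] RR(1) h(3) h(4)] by blast
      then show ?thesis using mm by simp
    qed
  next
    case c0: False
    show ?thesis
    proof (cases "c = 1")
      case True
      then have jj: "j = j'" using h(7) pt1'[of m j] pt1'[of m' j'] by simp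
      have d2: "d \<ge> 2" using h(5) True by linarith
      have "(Ls!(d-2)) (R m) j = (Ls!(d-2)) (R m') j'" using ptc_eq[OF d2 h(8)] .
      then have "(Ls!(d-2)) (R m) j = (Ls!(d-2)) (R m') j" using jj by simp
      then have "R m = R m'" using Lcol[OF dk[OF d2] RR(1) h(3) RR(2)] by blast
      then show ?thesis using Rinj h(1,2) jj by blast
    next
      case False
      have c2: "c \<ge> 2" using c0 False by linarith
      have d2: "d \<ge> 2" using c2 h(5) by linarith
      have ck: "c - 2 < k - 2" using c2 h(5,6) by linarith
      have ne: "c - 2 \<noteq> d - 2" using c2 h(5) by linarith
      have a: "(Ls!(c-2)) (R m) j = (Ls!(c-2)) (R m') j'" using ptc_eq[OF c2 h(7)] .
      have b: "(Ls!(d-2)) (R m) j = (Ls!(d-2)) (R m') j'" using ptc_eq[OF d2 h(8)] .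
      have "R m = R m' \<and> j = j'"
        using Lorth[OF ck dk[OF d2] ne RR(1) h(3) RR(2) h(4) a b] .
      then show ?thesis using Rinj h(1,2) by blast
    qed
  qed
qed

lemma key:
  assumes h: "m<\<rho>" "m'<\<rho>" "j<n" "j'<n" "c\<noteq>d" "c<k" "d<k"
    "pt m j c = pt m' j' c" "pt m j d = pt m' j' d"
  shows "m = m' \<and> j = j'"
proof (cases "c < d")
  case True then show ?thesis using key_lt[OF h(1-4) True h(7) h(8) h(9)] by blast
next
  case False then have "d < c" using h(5) by simp
  then show ?thesis using key_lt[OF h(1-4) \<open>d < c\<close> h(6) h(9) h(8)] by blast
qed

lemma blk_lin:
  assumes h: "m<\<rho>" "m'<\<rho>" "j<n" "j'<n" "x \<noteq> y" "x \<in> blk m j" "y \<in> blk m j"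
    "x \<in> blk m' j'" "y \<in> blk m' j'"
  shows "m = m' \<and> j = j'"
proof -
  obtain c c' d d' where cd: "c<k" "c'<k" "d<k" "d'<k" "x = pt m j c" "x = pt m' j' c'"
    "y = pt m j d" "y = pt m' j' d'" using h unfolding blk_def by auto
  have "c = c'" using grp_pt[of m j c] grp_pt[of m' j' c'] cd h by simp
  moreover have "d = d'" using grp_pt[of m j d] grp_pt[of m' j' d'] cd h by simp
  moreover have "c \<noteq> d" using cd(5,7) h(5) by auto
  ultimately show ?thesis using key[OF h(1-4) _ cd(1) cd(3)] cd(5-8) by simp
qed

lemma blk_card: "m<\<rho> \<Longrightarrow> j<n \<Longrightarrow> card (blk m j) = k"
proof -
  assume h: "m<\<rho>" "j<n"
  have "inj_on (pt m j) {0..<k}" unfolding inj_on_def using grp_pt h by (metis atLeastLessThan_iff)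
  then show ?thesis by (simp add: blk_def card_image)
qed

lemma blk_sub: "m<\<rho> \<Longrightarrow> j<n \<Longrightarrow> blk m j \<subseteq> {0..<(k-1)*n + \<rho>}"
  using pt_bound unfolding blk_def by fastforce

lemma blk_low: "m<\<rho> \<Longrightarrow> blk m j \<inter> {0..<\<rho>} = {m}"
proof -
  assume h: "m<\<rho>"
  have "0 \<in> {0..<k}" using k3 by simp
  then have "m \<in> blk m j" unfolding blk_def by (force simp: pt_def)
  moreover have "x \<in> blk m j \<Longrightarrow> x < \<rho> \<Longrightarrow> x = m" for x
    unfolding blk_def using pt_ge by (force simp: pt_def)
  ultimately show ?thesis using h by auto
qed

lemma blk_one: "j<n \<Longrightarrow> \<rho> + j \<in> blk m j"
proof -
  have "1 \<in> {0..<k}" using k3 by simp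
  then show "\<rho> + j \<in> blk m j" unfolding blk_def by (force simp: pt_def)
qed

lemma blk_mid: "m<\<rho> \<Longrightarrow> j<n \<Longrightarrow> blk m j \<inter> {\<rho>..<\<rho>+n} = {\<rho>+j}"
proof -
  assume h: "m<\<rho>" "j<n"
  have "x \<in> blk m j \<Longrightarrow> \<rho> \<le> x \<Longrightarrow> x < \<rho> + n \<Longrightarrow> x = \<rho> + j" for x
  proof -
    assume x: "x \<in> blk m j" "\<rho> \<le> x" "x < \<rho> + n"
    obtain c where c: "c<k" "x = pt m j c" using x unfolding blk_def by auto
    have "grp x = 1" using x n1 by (simp add: grp_def)
    then have "c = 1" using grp_pt c h by simp
    then show ?thesis using c by (simp add: pt_def)
  qed
  then show ?thesis using blk_one h by auto
qed

lemma blk_inj: "m<\<rho> \<Longrightarrow> j<n \<Longrightarrow> m'<\<rho> \<Longrightarrow> j'<n \<Longrightarrow> blk m j = blk m' j' \<Longrightarrow> m = m' \<and> j = j'"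
proof -
  assume h: "m<\<rho>" "j<n" "m'<\<rho>" "j'<n" "blk m j = blk m' j'"
  have "{m} = {m'}" using blk_low[of m j] blk_low[of m' j'] h by simp
  moreover have "{\<rho>+j} = {\<rho>+j'}" using blk_mid[of m j] blk_mid[of m' j'] h by simp
  ultimately show ?thesis by simp
qed

lemma tr_disj:
  assumes h: "m<\<rho>" "m'<\<rho>" "m \<noteq> m'"
  shows "blk m (S m) \<inter> blk m' (S m') = {}"
proof (rule ccontr)
  assume "blk m (S m) \<inter> blk m' (S m') \<noteq> {}"
  then obtain c c' where cd: "c<k" "c'<k" "pt m (S m) c = pt m' (S m') c'"
    unfolding blk_def by auto
  have "c = c'" using grp_pt[of m "S m" c] grp_pt[of m' "S m'" c'] cd h RS by simp
  show False
  proof (cases "c \<ge> 2")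
    case True
    then have "(Ls!(c-2)) (R m) (S m) = (Ls!(c-2)) (R m') (S m')"
      using cd \<open>c = c'\<close> by (simp add: pt_def)
    moreover have "c-2 < k-2" using True cd by linarith
    ultimately show False using Tsym[of "c-2" m m'] h by blast
  next
    case False
    then have "c = 0 \<or> c = 1" by auto
    then show False
    proof
      assume "c = 0" then show False using cd \<open>c = c'\<close> h by (simp add: pt_def)
    next
      assume "c = 1" then have "S m = S m'" using cd \<open>c = c'\<close> by (simp add: pt_def)
      then show False using Sinj h by blast
    qed
  qed
qed

end

theorem theorem5p1:
  fixes k n \<rho> :: nat
  assumes "k \<ge> 3" and "n \<ge> 1" and "1 \<le> \<rho>" and "\<rho> \<le> n"
    and "\<exists>Ls T. length Ls = k - 2 \<and> MOLS n Ls \<and>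
           common_partial_transversal n Ls T \<and> card T = \<rho>"
  shows "\<exists>(X :: nat set) B. packing ((k - 1) * n + \<rho>) k X B \<and>
           card B = \<rho> * n + D \<rho> k \<and> largest_PPC_size B \<rho>"
proof -
  obtain Ls T where LT: "length Ls = k - 2" "MOLS n Ls" "common_partial_transversal n Ls T" "card T = \<rho>"
    using assms(5) by blast
  have finT: "finite T" using LT(4) assms(3) card.infinite by force
  obtain e where e: "bij_betw e {0..<\<rho>} T" using ex_bij_betw_nat_finite[OF finT] LT(4) by blast
  have Te: "T = e ` {0..<\<rho>}" and einj: "inj_on e {0..<\<rho>}" using e by (auto simp: bij_betw_def)
  interpret cstr k n \<rho> Ls e
    using assms LT Te einj by (unfold_locales) auto
  define SS where "SS = {card B | B :: nat set set. packing \<rho> k {0..<\<rho>} B}"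
  have pk_sub: "packing \<rho> k {0..<\<rho>} B \<Longrightarrow> B \<subseteq> Pow {0..<\<rho>}" for B :: "nat set set"
    by (auto simp: packing_def)
  have "SS \<subseteq> card ` Pow (Pow {0..<\<rho>})" unfolding SS_def using pk_sub by blast
  then have finSS: "finite SS" by (rule finite_subset) simp
  have "packing \<rho> k {0..<\<rho>} ({} :: nat set set)" by (simp add: packing_def)
  then have "SS \<noteq> {}" unfolding SS_def by blast
  then have "Max SS \<in> SS" using finSS by (rule Max_in[rotated])
  then obtain B0 :: "nat set set" where B0: "packing \<rho> k {0..<\<rho>} B0" "card B0 = D \<rho> k"
    unfolding SS_def D_def by auto
  have B0sub: "b \<in> B0 \<Longrightarrow> b \<subseteq> {0..<\<rho>} \<and> card b = k" for b using B0(1) by (auto simp: packing_def)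
  have finB0: "finite B0" using pk_sub[OF B0(1)] finite_subset by blast
  have linB0: "linear_bl B0" using B0(1) finB0 by (intro lin_from_pair) (auto simp: packing_def)
  define TDB where "TDB = (\<lambda>(m,j). blk m j) ` ({0..<\<rho>} \<times> {0..<n})"
  define B where "B = TDB \<union> B0"
  define X where "X = {0..<(k-1)*n + \<rho>}"
  have finTDB: "finite TDB" unfolding TDB_def by simp
  have TDBE: "b \<in> TDB \<Longrightarrow> (\<exists>m j. m < \<rho> \<and> j < n \<and> b = blk m j)" for b
  proof -
    assume "b \<in> TDB"
    then obtain p where p: "p \<in> {0..<\<rho>} \<times> {0..<n}" "b = (\<lambda>(m,j). blk m j) p" unfolding TDB_def by blast
    then show ?thesis by (cases p) auto
  qed
  have linB: "linear_bl B" unfolding linear_bl_def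
  proof (intro ballI allI impI)
    fix b c x y assume h: "b \<in> B" "c \<in> B" "x \<noteq> y \<and> x \<in> b \<and> y \<in> b \<and> x \<in> c \<and> y \<in> c"
    have mixed: False if mx: "b' \<in> TDB" "c' \<in> B0" "x \<in> b'" "y \<in> b'" "x \<in> c'" "y \<in> c'" for b' c'
    proof -
      obtain m j where mj: "m < \<rho>" "j < n" "b' = blk m j" using TDBE mx by blast
      have "c' \<subseteq> {0..<\<rho>}" using B0sub mx(2) by blast
      then have "x \<in> {0..<\<rho>}" "y \<in> {0..<\<rho>}" using mx by auto
      then have "x \<in> blk m j \<inter> {0..<\<rho>}" "y \<in> blk m j \<inter> {0..<\<rho>}" using mj mx by auto
      then have "x = m" "y = m" unfolding blk_low[OF mj(1)] by auto
      then show False using h by simp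
    qed
    show "b = c"
    proof (cases "b \<in> TDB")
      case bT: True
      show ?thesis
      proof (cases "c \<in> TDB")
        case True
        obtain m j where mj: "m < \<rho>" "j < n" "b = blk m j" using TDBE bT by blast
        obtain m' j' where mj': "m' < \<rho>" "j' < n" "c = blk m' j'" using TDBE True by blast
        show ?thesis using blk_lin[of m m' j j' x y] mj mj' h by auto
      next
        case False then have "c \<in> B0" using h B_def by auto
        then show ?thesis using mixed bT h by blast
      qed
    next
      case bF: False then have bB: "b \<in> B0" using h B_def by auto
      show ?thesis
      proof (cases "c \<in> TDB")
        case True then show ?thesis using mixed bB h by blast
      next
        case False then have "c \<in> B0" using h B_def by auto
        then show ?thesis using linB0 bB h unfolding linear_bl_def by blast
      qed
    qed
  qed
  have finB: "finite B" using finTDB finB0 B_def by simp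
  have blocks: "b \<in> B \<Longrightarrow> b \<subseteq> X \<and> card b = k" for b
  proof -
    assume "b \<in> B"
    then consider "b \<in> TDB" | "b \<in> B0" using B_def by auto
    then show ?thesis
    proof cases
      case 1 then show ?thesis using TDBE blk_sub blk_card X_def by blast
    next
      case 2 then show ?thesis using B0sub X_def by fastforce
    qed
  qed
  have pack: "packing ((k - 1) * n + \<rho>) k X B"
    unfolding packing_def using blocks pair_from_lin[OF finB linB] X_def by auto
  have disj: "TDB \<inter> B0 = {}"
  proof (rule ccontr)
    assume "TDB \<inter> B0 \<noteq> {}"
    then obtain b where b: "b \<in> TDB" "b \<in> B0" by blast
    obtain m j where mj: "m < \<rho>" "j < n" "b = blk m j" using TDBE b by blast
    have "\<rho> + j \<in> b" using blk_one mj by simp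
    then show False using B0sub b by fastforce
  qed
  have "inj_on (\<lambda>(m,j). blk m j) ({0..<\<rho>} \<times> {0..<n})"
    unfolding inj_on_def using blk_inj by auto
  then have cTDB: "card TDB = \<rho> * n" unfolding TDB_def by (simp add: card_image)
  have cardB: "card B = \<rho> * n + D \<rho> k"
    unfolding B_def using card_Un_disjoint[OF finTDB finB0 disj] cTDB B0(2) by simp
  define P where "P = (\<lambda>m. blk m (S m)) ` {0..<\<rho>}"
  have PP: "PPC B P" unfolding PPC_def
  proof
    show "P \<subseteq> B"
    proof
      fix b assume "b \<in> P"
      then obtain m where m: "m < \<rho>" "b = blk m (S m)" unfolding P_def by auto
      have "(m, S m) \<in> {0..<\<rho>} \<times> {0..<n}" using m RS[OF m(1)] by simp
      then have "(\<lambda>(m,j). blk m j) (m, S m) \<in> TDB" unfolding TDB_def by (rule imageI)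
      then show "b \<in> B" using m B_def by simp
    qed
    show "\<forall>b\<in>P. \<forall>c\<in>P. b \<noteq> c \<longrightarrow> b \<inter> c = {}"
    proof (intro ballI impI)
      fix b c assume bc: "b \<in> P" "c \<in> P" "b \<noteq> c"
      obtain m where m: "m < \<rho>" "b = blk m (S m)" using bc(1) unfolding P_def by auto
      obtain m' where m': "m' < \<rho>" "c = blk m' (S m')" using bc(2) unfolding P_def by auto
      have "m \<noteq> m'" using m m' bc by auto
      then show "b \<inter> c = {}" using tr_disj m m' by simp
    qed
  qed
  have "inj_on (\<lambda>m. blk m (S m)) {0..<\<rho>}"
  proof (rule inj_onI)
    fix x y assume xy: "x \<in> {0..<\<rho>}" "y \<in> {0..<\<rho>}" "blk x (S x) = blk y (S y)"
    then have "x < \<rho>" "y < \<rho>" by auto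
    then show "x = y" using blk_inj[of x "S x" y "S y"] RS xy(3) by blast
  qed
  then have cP: "card P = \<rho>" unfolding P_def by (simp add: card_image)
  have meet: "b \<in> B \<Longrightarrow> b \<inter> {0..<\<rho>} \<noteq> {}" for b
  proof -
    assume "b \<in> B"
    then consider "b \<in> TDB" | "b \<in> B0" using B_def by auto
    then show ?thesis
    proof cases
      case 1 then show ?thesis using TDBE blk_low by fastforce
    next
      case 2 then have "b \<subseteq> {0..<\<rho>}" "card b = k" using B0sub by auto
      then have "b \<noteq> {}" using assms(1) by auto
      then show ?thesis using \<open>b \<subseteq> {0..<\<rho>}\<close> by blast
    qed
  qed
  have noP: False if Q: "PPC B Q" "finite Q" "card Q = \<rho> + 1" for Q
  proof -
    define g where "g b = (SOME x. x \<in> b \<inter> {0..<\<rho>})" for b :: "nat set"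
    have g: "b \<in> Q \<Longrightarrow> g b \<in> b \<inter> {0..<\<rho>}" for b
    proof -
      assume "b \<in> Q"
      then have "b \<in> B" using Q by (auto simp: PPC_def)
      then show ?thesis unfolding g_def using meet by (meson ex_in_conv someI_ex)
    qed
    have "inj_on g Q"
    proof (rule inj_onI)
      fix b c assume bc: "b \<in> Q" "c \<in> Q" "g b = g c"
      have "g b \<in> b" "g c \<in> c" using g[OF bc(1)] g[OF bc(2)] by auto
      then have "g b \<in> b \<inter> c" using bc(3) by simp
      then show "b = c" using Q(1) bc unfolding PPC_def by blast
    qed
    note inj = this
    have sub: "g ` Q \<subseteq> {0..<\<rho>}" using g by blast
    have "card Q \<le> card {0..<\<rho>}" using card_inj_on_le[OF inj sub] by simp
    then show False using Q by simp
  qed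
  have "largest_PPC_size B \<rho>"
  proof -
    have "P \<subseteq> B" using PP by (simp add: PPC_def)
    then have "finite P" using finB finite_subset by blast
    then have "\<exists>P. PPC B P \<and> finite P \<and> card P = \<rho>" using PP cP by blast
    moreover have "\<not> (\<exists>P. PPC B P \<and> finite P \<and> card P = \<rho> + 1)" using noP by blast
    ultimately show ?thesis unfolding largest_PPC_size_def by blast
  qed
  then show ?thesis using pack cardB by blast
qed

end
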